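(* Let $\mathcal{G}$ be a connected undirected graph on $n>1$ nodes, i.e. a symmetric, strongly connected digraph, with the uniform weights described in the context. If $\epsilon\in\big(0,(1-\tfrac1n)(2-\tfrac1n)\big)$, then the deterministic algorithm with parameter $\epsilon$ achieves average consensus.
   Context: Setting: $\mathcal{G}=(\mathcal{V},\mathcal{E})$ with $\mathcal{V}=\{1,\dots,n\}$ and no selfloops. Symmetric means that $(j,i)\in\mathcal{E}$ implies $(i,j)\in\mathcal{E}$. The degree of $\mathcal{G}$ is $d=\max_i|\{j:(j,i)\in\mathcal{E}\}|$. Weights: $a_{ij}=1/(2dn)$ if $(j,i)\in\mathcal{E}$ and $0$ otherwise. Also $b_{ih}=1/(dn)$ if $(i,h)\in\mathcal{E}$ and $0$ otherwise. Matrices: $L=D-A$, where $A=[a_{ij}]$ and $D=\mathrm{diag}(\sum_j a_{ij})$. $S=(I-\tilde D)+B$, where $B=[b_{ih}]^T$ and $\tilde D=\mathrm{diag}(\sum_h b_{ih})$. Also $M=\begin{bmatrix} I-L & \epsilon I\\ L & S-\epsilon I\end{bmatrix}$. Deterministic algorithm: $(x(k+1),s(k+1))^T=M(x(k),s(k))^T$ with $s(0)=0$. Average consensus: for every $x(0)\in\mathbb{R}^n$, $(x(k),s(k))\to(x_a\mathbf{1},0)$ where $x_a=\mathbf{1}^Tx(0)/n$. *)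

theory Defs
  imports "HOL-Analysis.Analysis"
begin

(* Graph on the finite vertex type 'n (n = CARD('n)); E j i means (j,i) is an edge. *)

definition no_selfloops :: "('n \<Rightarrow> 'n \<Rightarrow> bool) \<Rightarrow> bool" where
  "no_selfloops E \<longleftrightarrow> (\<forall>i. \<not> E i i)"

definition symmetric_graph :: "('n \<Rightarrow> 'n \<Rightarrow> bool) \<Rightarrow> bool" where
  "symmetric_graph E \<longleftrightarrow> (\<forall>i j. E j i \<longrightarrow> E i j)"

definition strongly_connected :: "('n \<Rightarrow> 'n \<Rightarrow> bool) \<Rightarrow> bool" where
  "strongly_connected E \<longleftrightarrow> (\<forall>i j. E\<^sup>*\<^sup>* i j)"

definition degree :: "('n::finite \<Rightarrow> 'n \<Rightarrow> bool) \<Rightarrow> nat" where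
  "degree E = Max (range (\<lambda>i. card {j. E j i}))"

definition Amat :: "('n::finite \<Rightarrow> 'n \<Rightarrow> bool) \<Rightarrow> real^'n^'n" where
  "Amat E = (\<chi> i j. if E j i then 1 / (2 * real (degree E) * real CARD('n)) else 0)"

definition Dmat :: "('n::finite \<Rightarrow> 'n \<Rightarrow> bool) \<Rightarrow> real^'n^'n" where
  "Dmat E = (\<chi> i j. if i = j then (\<Sum>k\<in>UNIV. Amat E $ i $ k) else 0)"

definition Lmat :: "('n::finite \<Rightarrow> 'n \<Rightarrow> bool) \<Rightarrow> real^'n^'n" where
  "Lmat E = Dmat E - Amat E"

definition bw :: "('n::finite \<Rightarrow> 'n \<Rightarrow> bool) \<Rightarrow> 'n \<Rightarrow> 'n \<Rightarrow> real" where
  "bw E i h = (if E i h then 1 / (real (degree E) * real CARD('n)) else 0)"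

definition Bmat :: "('n::finite \<Rightarrow> 'n \<Rightarrow> bool) \<Rightarrow> real^'n^'n" where
  "Bmat E = transpose (\<chi> i h. bw E i h)"

definition Dtmat :: "('n::finite \<Rightarrow> 'n \<Rightarrow> bool) \<Rightarrow> real^'n^'n" where
  "Dtmat E = (\<chi> i j. if i = j then (\<Sum>h\<in>UNIV. bw E i h) else 0)"

definition Smat :: "('n::finite \<Rightarrow> 'n \<Rightarrow> bool) \<Rightarrow> real^'n^'n" where
  "Smat E = (mat 1 - Dtmat E) + Bmat E"

definition Mstep :: "('n::finite \<Rightarrow> 'n \<Rightarrow> bool) \<Rightarrow> real \<Rightarrow> (real^'n) \<times> (real^'n) \<Rightarrow> (real^'n) \<times> (real^'n)" where
  "Mstep E eps xs =
     ((mat 1 - Lmat E) *v fst xs + (eps *\<^sub>R mat 1) *v snd xs,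
      Lmat E *v fst xs + (Smat E - eps *\<^sub>R mat 1) *v snd xs)"

definition traj :: "('n::finite \<Rightarrow> 'n \<Rightarrow> bool) \<Rightarrow> real \<Rightarrow> real^'n \<Rightarrow> nat \<Rightarrow> (real^'n) \<times> (real^'n)" where
  "traj E eps x0 k = (Mstep E eps ^^ k) (x0, 0)"

definition average_consensus :: "('n::finite \<Rightarrow> 'n \<Rightarrow> bool) \<Rightarrow> real \<Rightarrow> bool" where
  "average_consensus E eps \<longleftrightarrow>
     (\<forall>x0 :: real^'n. traj E eps x0 \<longlonglongrightarrow>
        (((\<Sum>i\<in>UNIV. x0 $ i) / real CARD('n)) *\<^sub>R vec 1, 0))"

end

theory Submission
  imports Defs "Jordan_Normal_Form.Spectral_Radius"
begin

no_notation Matrix.vec_index (infixl \<open>$\<close> 100)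


definition lin :: "('k::finite \<Rightarrow> 'k \<Rightarrow> real) \<Rightarrow> ('k \<Rightarrow> real) \<Rightarrow> ('k \<Rightarrow> real)" where
  "lin B w = (\<lambda>k. \<Sum>l\<in>UNIV. B k l * w l)"

lemma lin_apply: "lin B w k = (\<Sum>l\<in>UNIV. B k l * w l)" by (simp add: lin_def)

lemma lin_scale_pow:
  "(lin (\<lambda>i j. B i j / r) ^^ t) w k * r ^ t = (lin B ^^ t) w k" if "r \<noteq> 0"
proof (induction t arbitrary: k)
  case 0 then show ?case by simp
next
  case (Suc t)
  let ?C = "\<lambda>i j. B i j / r"
  have "(lin B ^^ Suc t) w k = lin B ((lin B ^^ t) w) k" by simp
  also have "\<dots> = (\<Sum>l\<in>UNIV. B k l * (lin B ^^ t) w l)" by (rule lin_apply)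
  also have "\<dots> = (\<Sum>l\<in>UNIV. B k l * ((lin ?C ^^ t) w l * r ^ t))"
    using Suc by simp
  also have "\<dots> = (\<Sum>l\<in>UNIV. ?C k l * (lin ?C ^^ t) w l) * r ^ Suc t"
    unfolding sum_distrib_right using that by (intro sum.cong) (auto simp: field_simps)
  finally have 1: "(lin B ^^ Suc t) w k = (\<Sum>l\<in>UNIV. ?C k l * (lin ?C ^^ t) w l) * r ^ Suc t" .
  have 2: "(lin ?C ^^ Suc t) w k = lin ?C ((lin ?C ^^ t) w) k" by simp
  show ?case using 1 2 lin_apply[of ?C "(lin ?C ^^ t) w" k] by simp
qed

lemma decay:
  fixes A :: "'k::finite \<Rightarrow> 'k \<Rightarrow> real"
  assumes ev: "\<And>\<mu> z. z \<noteq> (\<lambda>_. 0) \<Longrightarrow> (\<And>k. (\<Sum>l\<in>UNIV. complex_of_real (A k l) * z l) = \<mu> * z k) \<Longrightarrow> cmod \<mu> < 1"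
  shows "(\<lambda>t. (lin A ^^ t) w k) \<longlonglongrightarrow> 0"
proof -
  define K where "K = CARD('k)"
  obtain g where g: "bij_betw g {0..<K} (UNIV::'k set)"
    using ex_bij_betw_nat_finite[of "UNIV::'k set"] unfolding K_def by auto
  define h where "h = inv_into {0..<K} g"
  have hg: "\<And>i. i < K \<Longrightarrow> h (g i) = i" unfolding h_def using g
    by (simp add: bij_betw_inv_into_left)
  have gh: "\<And>k. g (h k) = k" unfolding h_def using g
    by (meson UNIV_I bij_betw_inv_into_right)
  have hK: "\<And>k. h k < K" unfolding h_def using g
    by (metis UNIV_I atLeastLessThan_iff bij_betw_def inv_into_into)
  have K0: "K > 0" unfolding K_def by simp
  define toM :: "('k \<Rightarrow> 'k \<Rightarrow> real) \<Rightarrow> complex mat" where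
    "toM B = Matrix.mat K K (\<lambda>(i,j). complex_of_real (B (g i) (g j)))" for B
  define tov :: "('k \<Rightarrow> real) \<Rightarrow> complex Matrix.vec" where
    "tov w = Matrix.vec K (\<lambda>i. complex_of_real (w (g i)))" for w
  have toMc: "toM B \<in> carrier_mat K K" for B unfolding toM_def by simp
  have reidx: "(\<Sum>j\<in>{0..<K}. f (g j)) = (\<Sum>l\<in>UNIV. f l)" for f :: "'k \<Rightarrow> 'b::comm_monoid_add"
    using sum.reindex_bij_betw[OF g] .
  have lin_tov: "tov (lin B w) = toM B *\<^sub>v tov w" for B w
  proof (rule eq_vecI)
    fix i assume "i < dim_vec (toM B *\<^sub>v tov w)"
    then have i: "i < K" unfolding toM_def by simp
    have "vec_index (toM B *\<^sub>v tov w) i = (\<Sum>j\<in>{0..<K}. complex_of_real (B (g i) (g j)) * complex_of_real (w (g j)))"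
      using i unfolding toM_def tov_def by (simp add: scalar_prod_def)
    also have "\<dots> = (\<Sum>l\<in>UNIV. complex_of_real (B (g i) l) * complex_of_real (w l))"
      by (rule reidx)
    also have "\<dots> = vec_index (tov (lin B w)) i" using i unfolding tov_def lin_apply by simp
    finally show "vec_index (tov (lin B w)) i = vec_index (toM B *\<^sub>v tov w) i" by simp
  qed (simp add: toM_def tov_def)
  have pow_tov: "tov ((lin B ^^ t) w) = (toM B ^\<^sub>m t) *\<^sub>v tov w" for B t w
  proof (induction t arbitrary: w)
    case 0 then show ?case by (simp add: tov_def toM_def)
  next
    case (Suc t)
    have "tov ((lin B ^^ Suc t) w) = tov ((lin B ^^ t) (lin B w))" by (simp add: funpow_Suc_right del: funpow.simps)
    also have "\<dots> = (toM B ^\<^sub>m t) *\<^sub>v (toM B *\<^sub>v tov w)" using Suc lin_tov by simp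
    also have "\<dots> = (toM B ^\<^sub>m t * toM B) *\<^sub>v tov w"
      using assoc_mult_mat_vec[of "toM B ^\<^sub>m t" K K "toM B" K "tov w"] pow_carrier_mat[OF toMc] toMc
      by (simp add: tov_def)
    finally show ?case by simp
  qed
  have ev_conv: "\<exists>z. z \<noteq> (\<lambda>_. 0) \<and> (\<forall>k. (\<Sum>l\<in>UNIV. complex_of_real (B k l) * z l) = \<mu> * z k)"
    if "eigenvector (toM B) v \<mu>" for B v \<mu>
  proof -
    have v: "v \<in> carrier_vec K" "v \<noteq> 0\<^sub>v K" "toM B *\<^sub>v v = \<mu> \<cdot>\<^sub>v v"
      using that unfolding eigenvector_def by (auto simp: toM_def)
    define z where "z k = vec_index v (h k)" for k
    have "z \<noteq> (\<lambda>_. 0)"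
    proof
      assume "z = (\<lambda>_. 0)"
      then have "vec_index v i = 0" if "i < K" for i using that hg unfolding z_def by metis
      then have "v = 0\<^sub>v K" using v(1) by (intro eq_vecI) auto
      with v(2) show False by simp
    qed
    moreover have "(\<Sum>l\<in>UNIV. complex_of_real (B k l) * z l) = \<mu> * z k" for k
    proof -
      have "vec_index (toM B *\<^sub>v v) (h k) = (\<Sum>j\<in>{0..<K}. complex_of_real (B (g (h k)) (g j)) * vec_index v j)"
        using hK[of k] v(1) unfolding toM_def by (simp add: scalar_prod_def)
      also have "\<dots> = (\<Sum>j\<in>{0..<K}. complex_of_real (B k (g j)) * z (g j))"
        using hg unfolding z_def gh by (intro sum.cong) auto
      also have "\<dots> = (\<Sum>l\<in>UNIV. complex_of_real (B k l) * z l)" by (rule reidx)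
      finally show ?thesis using v(3) hK[of k] v(1) unfolding z_def by simp
    qed
    ultimately show ?thesis by blast
  qed
  define S where "S = spectrum (toM A)"
  have finS: "finite S" unfolding S_def by (rule card_finite_spectrum[OF toMc])
  define \<rho> where "\<rho> = Max (insert 0 (norm ` S))"
  have S_le: "norm \<mu> \<le> \<rho>" if "\<mu> \<in> S" for \<mu> unfolding \<rho>_def using finS that by auto
  have "\<rho> \<in> insert 0 (norm ` S)" unfolding \<rho>_def using finS by (intro Max_in) auto
  moreover have "norm \<mu> < 1" if "\<mu> \<in> S" for \<mu>
    using that ev_conv ev unfolding S_def spectrum_def eigenvalue_def by blast
  ultimately have rho1: "\<rho> < 1" by auto
  have rho0: "\<rho> \<ge> 0" unfolding \<rho>_def using finS by (intro Max_ge_iff[THEN iffD2]) auto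
  define r where "r = (1 + \<rho>) / 2"
  have r: "0 < r" "r < 1" "\<rho> < r" using rho0 rho1 unfolding r_def by auto
  define B where "B = (\<lambda>i j. A i j / r)"
  have "spectral_radius (toM B) < 1"
  proof -
    have "spectral_radius (toM B) \<in> norm ` spectrum (toM B)"
      by (rule spectral_radius_mem_max(1)[OF toMc K0])
    then obtain \<nu> where \<nu>: "eigenvalue (toM B) \<nu>" and eq: "spectral_radius (toM B) = norm \<nu>"
      unfolding spectrum_def by auto
    then obtain v where v: "eigenvector (toM B) v \<nu>" unfolding eigenvalue_def by auto
    have "eigenvector (toM A) v (of_real r * \<nu>)"
    proof -
      have vc: "v \<in> carrier_vec K" "toM B *\<^sub>v v = \<nu> \<cdot>\<^sub>v v" using v unfolding eigenvector_def toM_def by auto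
      have "toM A *\<^sub>v v = of_real r \<cdot>\<^sub>v (toM B *\<^sub>v v)"
      proof (rule eq_vecI)
        fix i assume "i < dim_vec (of_real r \<cdot>\<^sub>v (toM B *\<^sub>v v))"
        then have i: "i < K" by (simp add: toM_def)
        show "vec_index (toM A *\<^sub>v v) i = vec_index (of_real r \<cdot>\<^sub>v (toM B *\<^sub>v v)) i"
          using i vc(1) r(1) unfolding toM_def B_def
          by (simp add: scalar_prod_def sum_distrib_left algebra_simps)
      qed (simp add: toM_def)
      then show ?thesis using v vc unfolding eigenvector_def toM_def
        by (auto simp: smult_smult_assoc)
    qed
    then have "of_real r * \<nu> \<in> S" unfolding S_def spectrum_def eigenvalue_def by auto
    then have "norm (of_real r * \<nu>) \<le> \<rho>" using S_le by blast
    then have "r * norm \<nu> \<le> \<rho>" using r(1) by (simp add: norm_mult)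
    then have "norm \<nu> < 1" using r
      by (smt (verit, ccfv_threshold) mult_le_cancel_left1 norm_ge_zero)
    then show ?thesis using eq by simp
  qed
  then obtain c where c: "\<And>t. norm_bound (toM B ^\<^sub>m t) c"
    using spectral_radius_jnf_norm_bound_less_1_upper_triangular[OF toMc] by blast
  define C where "C = (\<Sum>j\<in>{0..<K}. c * \<bar>w (g j)\<bar>)"
  have bnd: "\<bar>(lin B ^^ t) w k\<bar> \<le> C" for t
  proof -
    have "complex_of_real ((lin B ^^ t) w k) = vec_index (tov ((lin B ^^ t) w)) (h k)"
      using hK[of k] unfolding tov_def by (simp add: gh)
    also have "\<dots> = (\<Sum>j\<in>{0..<K}. (toM B ^\<^sub>m t) $$ (h k, j) * complex_of_real (w (g j)))"
      unfolding pow_tov using hK[of k] carrier_matD[OF pow_carrier_mat[OF toMc, of B t]]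
      by (auto simp: scalar_prod_def tov_def)
    finally have "\<bar>(lin B ^^ t) w k\<bar> = norm (\<Sum>j\<in>{0..<K}. (toM B ^\<^sub>m t) $$ (h k, j) * complex_of_real (w (g j)))"
      by (metis norm_of_real)
    also have "\<dots> \<le> (\<Sum>j\<in>{0..<K}. norm ((toM B ^\<^sub>m t) $$ (h k, j) * complex_of_real (w (g j))))"
      by (rule norm_sum)
    also have "\<dots> \<le> C" unfolding C_def
    proof (rule sum_mono)
      fix j assume j: "j \<in> {0..<K}"
      have "norm ((toM B ^\<^sub>m t) $$ (h k, j)) \<le> c"
        using c[of t] hK[of k] j carrier_matD[OF pow_carrier_mat[OF toMc, of B t]] unfolding norm_bound_def by auto
      then show "norm ((toM B ^\<^sub>m t) $$ (h k, j) * complex_of_real (w (g j))) \<le> c * \<bar>w (g j)\<bar>"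
        by (simp add: norm_mult mult_right_mono)
    qed
    finally show ?thesis .
  qed
  show ?thesis
  proof (rule Lim_null_comparison)
    show "\<forall>\<^sub>F t in sequentially. norm ((lin A ^^ t) w k) \<le> C * r ^ t"
    proof (intro always_eventually allI)
      fix t
      have "(lin A ^^ t) w k = (lin B ^^ t) w k * r ^ t"
        using lin_scale_pow[where r=r and B=A and t=t and w=w and k=k] r unfolding B_def by simp
      then show "norm ((lin A ^^ t) w k) \<le> C * r ^ t"
        using bnd[of t] r by (simp add: abs_mult mult_right_mono)
    qed
    show "(\<lambda>t. C * r ^ t) \<longlonglongrightarrow> 0"
      using r by (intro tendsto_mult_right_zero LIMSEQ_power_zero) auto
  qed
qed



definition cc :: "('n::finite \<Rightarrow> 'n \<Rightarrow> bool) \<Rightarrow> real" where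
  "cc E = 1 / (2 * real (Defs.degree E) * real CARD('n))"

lemma sum_UNIV_Plus: "(\<Sum>k\<in>(UNIV::('a::finite + 'b::finite) set). f k) = (\<Sum>i\<in>UNIV. f (Inl i)) + (\<Sum>i\<in>UNIV. f (Inr i))"
  using sum.Plus[of "UNIV::'a set" "UNIV::'b set" f] by (simp add: UNIV_Plus_UNIV comp_def)

lemma sum_delta_of_real: "(\<Sum>j\<in>UNIV. of_real (if i = j then a else 0) * (f j :: 'a::real_algebra_1)) = of_real a * f (i::'n::finite)"
proof -
  have "(\<Sum>j\<in>UNIV. of_real (if i = j then a else 0) * f j) = (\<Sum>j\<in>UNIV. if i = j then of_real a * f j else 0)"
    by (intro sum.cong) auto
  also have "\<dots> = of_real a * f i" by (subst sum.delta') auto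
  finally show ?thesis .
qed

lemma Amat_entry: "Amat E $ i $ j = (if E j i then cc E else 0)"
  by (simp add: Amat_def cc_def)

lemma Lmat_entry: "Lmat E $ i $ j = (if i = j then (\<Sum>k\<in>UNIV. Amat E $ i $ k) else 0) - Amat E $ i $ j"
  by (simp add: Lmat_def Dmat_def)

lemma Lop: fixes w :: "'n::finite \<Rightarrow> 'a::real_algebra_1"
  shows "(\<Sum>j\<in>UNIV. of_real (Lmat E $ i $ j) * w j) = of_real (cc E) * (\<Sum>j\<in>UNIV. if E j i then w i - w j else 0)"
proof -
  let ?D = "\<Sum>k\<in>UNIV. Amat E $ i $ k"
  have "(\<Sum>j\<in>UNIV. of_real (Lmat E $ i $ j) * w j) =
        (\<Sum>j\<in>UNIV. of_real (if i = j then ?D else 0) * w j) - (\<Sum>j\<in>UNIV. of_real (Amat E $ i $ j) * w j)"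
    unfolding Lmat_entry of_real_diff left_diff_distrib sum_subtractf ..
  also have "(\<Sum>j\<in>UNIV. of_real (if i = j then ?D else 0) * w j) = of_real ?D * w i"
    by (rule sum_delta_of_real)
  also have "of_real ?D * w i = (\<Sum>j\<in>UNIV. of_real (Amat E $ i $ j) * w i)"
    by (simp add: of_real_sum sum_distrib_right)
  also have "(\<Sum>j\<in>UNIV. of_real (Amat E $ i $ j) * w i) - (\<Sum>j\<in>UNIV. of_real (Amat E $ i $ j) * w j)
      = (\<Sum>j\<in>UNIV. of_real (Amat E $ i $ j) * (w i - w j))"
    by (simp add: sum_subtractf right_diff_distrib)
  also have "\<dots> = of_real (cc E) * (\<Sum>j\<in>UNIV. if E j i then w i - w j else 0)"
    unfolding sum_distrib_left by (intro sum.cong) (auto simp: Amat_entry)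
  finally show ?thesis .
qed

lemma Lrow: "(\<Sum>j\<in>UNIV. Lmat E $ i $ j) = 0"
proof -
  have z: "(\<Sum>j\<in>UNIV. if E j i then (1::real) - 1 else 0) = 0" by (intro sum.neutral) simp
  show ?thesis using Lop[of E i "\<lambda>_. (1::real)"] unfolding z by simp
qed

lemma Lsym: assumes "symmetric_graph E" shows "Lmat E $ i $ j = Lmat E $ j $ i"
  using assms unfolding symmetric_graph_def Lmat_entry Amat_entry by auto

lemma Lcol: assumes "symmetric_graph E" shows "(\<Sum>i\<in>UNIV. Lmat E $ i $ j) = 0"
  using Lrow[of E j] Lsym[OF assms] by simp

lemma Smat_entry: assumes "symmetric_graph E"
  shows "Smat E $ i $ j = (if i = j then 1 else 0) - 2 * Lmat E $ i $ j"
proof -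
  have B: "Bmat E $ i $ j = 2 * Amat E $ i $ j"
    by (simp add: Bmat_def Amat_entry bw_def cc_def Finite_Cartesian_Product.transpose_def)
  have "(\<Sum>h\<in>UNIV. bw E i' h) = (\<Sum>h\<in>UNIV. 2 * Amat E $ i' $ h)" for i'
    using assms unfolding symmetric_graph_def
    by (intro sum.cong) (auto simp: Amat_entry bw_def cc_def)
  then have Dt: "Dtmat E $ i $ j = (if i = j then 2 * (\<Sum>k\<in>UNIV. Amat E $ i $ k) else 0)"
    by (simp add: Dtmat_def sum_distrib_left)
  show ?thesis unfolding Smat_def using B Dt by (simp add: Lmat_entry Finite_Cartesian_Product.mat_def)
qed



definition Lc :: "('n::finite \<Rightarrow> 'n \<Rightarrow> bool) \<Rightarrow> ('n \<Rightarrow> complex) \<Rightarrow> 'n \<Rightarrow> complex" where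
  "Lc E w i = (\<Sum>j\<in>UNIV. of_real (Lmat E $ i $ j) * w j)"

lemma Lc_lin: "Lc E (\<lambda>j. a * f j + b * g j) i = a * Lc E f i + b * Lc E g i"
  by (simp add: Lc_def sum.distrib sum_distrib_left algebra_simps)

lemma Lc_sum: assumes "symmetric_graph E" shows "(\<Sum>i\<in>UNIV. Lc E f i) = 0"
proof -
  have "(\<Sum>i\<in>UNIV. Lc E f i) = (\<Sum>j\<in>UNIV. \<Sum>i\<in>UNIV. of_real (Lmat E $ i $ j) * f j)"
    unfolding Lc_def by (rule sum.swap)
  also have "\<dots> = (\<Sum>j\<in>UNIV. of_real (\<Sum>i\<in>UNIV. Lmat E $ i $ j) * f j)"
    by (simp add: sum_distrib_right of_real_sum)
  also have "\<dots> = 0" using Lcol[OF assms] by simp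
  finally show ?thesis .
qed

lemma sum_if_card: "(\<Sum>j\<in>(UNIV::'n::finite set). if P j then a else 0) = real (card {j. P j}) * (a::real)"
proof -
  have "(\<Sum>j\<in>(UNIV::'n set). if P j then a else 0) = (\<Sum>j\<in>{j. P j}. a)"
    by (simp add: sum.If_cases Int_def)
  then show ?thesis by simp
qed

lemma deg_le: "card {j. E j i} \<le> Defs.degree E"
  unfolding Defs.degree_def by (rule Max_ge) auto

lemma Leig:
  fixes E :: "'n::finite \<Rightarrow> 'n \<Rightarrow> bool" and w :: "'n \<Rightarrow> complex" and r :: complex
  assumes sym: "symmetric_graph E" and sc: "strongly_connected E" and d0: "Defs.degree E > 0"
    and w0: "w \<noteq> (\<lambda>_. 0)" and ws: "(\<Sum>i\<in>UNIV. w i) = 0"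
    and ev: "\<And>i. Lc E w i = r * w i"
  shows "\<exists>\<rho>. r = of_real \<rho> \<and> 0 < \<rho> \<and> \<rho> \<le> 1 / real CARD('n)"
proof -
  define c where "c = cc E"
  define d where "d = real (Defs.degree E)"
  define n where "n = real CARD('n)"
  have d0': "d > 0" using d0 unfolding d_def by simp
  have n0: "n > 0" unfolding n_def by simp
  have c0: "c > 0" unfolding c_def cc_def using d0' n0 unfolding d_def n_def by simp
  have symE: "E i j \<longleftrightarrow> E j i" for i j using sym unfolding symmetric_graph_def by auto
  define q where "q i j = (if E j i then (cmod (w i - w j))^2 else 0)" for i j
  define Qs where "Qs = (\<Sum>i\<in>UNIV. \<Sum>j\<in>UNIV. q i j)"
  define N where "N = (\<Sum>i\<in>UNIV. (cmod (w i))^2)"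
  define F where "F i j = (if E j i then cnj (w i) * (w i - w j) else 0)" for i j
  define X where "X = (\<Sum>i\<in>UNIV. \<Sum>j\<in>UNIV. F i j)"
  obtain i0 where i0: "w i0 \<noteq> 0" using w0 by auto
  have N0: "N > 0" unfolding N_def
  proof (rule sum_pos2[of UNIV i0])
    show "0 < (cmod (w i0))^2" using i0 by simp
  qed auto
  have X_swap: "X = (\<Sum>i\<in>UNIV. \<Sum>j\<in>UNIV. F j i)" unfolding X_def by (rule sum.swap)
  have "(\<Sum>i\<in>UNIV. \<Sum>j\<in>UNIV. F i j + F j i) = X + (\<Sum>i\<in>UNIV. \<Sum>j\<in>UNIV. F j i)"
    by (simp add: X_def sum.distrib)
  then have "2 * X = (\<Sum>i\<in>UNIV. \<Sum>j\<in>UNIV. F i j + F j i)"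
    using X_swap by simp
  also have "\<dots> = (\<Sum>i\<in>UNIV. \<Sum>j\<in>UNIV. of_real (q i j))"
  proof (intro sum.cong refl)
    fix i j
    have "cnj (w i) * (w i - w j) + cnj (w j) * (w j - w i) = (w i - w j) * cnj (w i - w j)"
      by (simp add: algebra_simps)
    also have "\<dots> = of_real ((cmod (w i - w j))^2)" by (rule complex_norm_square[symmetric])
    finally show "F i j + F j i = of_real (q i j)"
      unfolding F_def q_def using symE[of i j] by auto
  qed
  also have "\<dots> = of_real Qs" unfolding Qs_def by (simp add: of_real_sum)
  finally have X2: "2 * X = of_real Qs" .
  have "(\<Sum>i\<in>UNIV. cnj (w i) * Lc E w i) = of_real c * X"
    unfolding Lc_def Lop X_def F_def c_def
    by (simp add: sum_distrib_left algebra_simps if_distrib cong: if_cong)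
  moreover have "(\<Sum>i\<in>UNIV. cnj (w i) * Lc E w i) = r * of_real N"
  proof -
    have "(\<Sum>i\<in>UNIV. cnj (w i) * Lc E w i) = (\<Sum>i\<in>UNIV. r * (w i * cnj (w i)))"
      using ev by (simp add: algebra_simps)
    also have "\<dots> = r * of_real N"
      unfolding N_def of_real_sum sum_distrib_left complex_norm_square by simp
    finally show ?thesis .
  qed
  ultimately have rN: "r * of_real N = of_real c * X" by simp
  define \<rho> where "\<rho> = c * Qs / (2 * N)"
  have r_eq: "r = of_real \<rho>"
  proof -
    have "r * of_real N = of_real c * (of_real Qs / 2)" using rN X2
      by (metis mult_2 nonzero_mult_div_cancel_left zero_neq_numeral)
    then have "r = of_real c * (of_real Qs / 2) / of_real N" using N0
      by (simp add: field_simps)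
    then show ?thesis unfolding \<rho>_def by simp
  qed
  have q0: "q i j \<ge> 0" for i j unfolding q_def by auto
  have Qs0: "Qs \<ge> 0" unfolding Qs_def using q0 by (simp add: sum_nonneg)
  have qle: "q i j \<le> (if E j i then 2 * (cmod (w i))^2 else 0) + (if E j i then 2 * (cmod (w j))^2 else 0)" for i j
  proof -
    have "cmod (w i - w j) \<le> cmod (w i) + cmod (w j)" by (rule norm_triangle_ineq4)
    then have "(cmod (w i - w j))^2 \<le> (cmod (w i) + cmod (w j))^2"
      by (simp add: power_mono)
    also have "\<dots> \<le> 2 * (cmod (w i))^2 + 2 * (cmod (w j))^2"
      by (smt (verit) power2_diff power2_sum zero_le_power2)
    finally show ?thesis unfolding q_def by auto
  qed
  have S1: "(\<Sum>i\<in>UNIV. \<Sum>j\<in>UNIV. if E j i then 2 * (cmod (w i))^2 else 0) \<le> 2 * d * N"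
  proof -
    have "(\<Sum>i\<in>UNIV. \<Sum>j\<in>UNIV. if E j i then 2 * (cmod (w i))^2 else 0)
        = (\<Sum>i\<in>UNIV. real (card {j. E j i}) * (2 * (cmod (w i))^2))"
      by (simp add: sum_if_card)
    also have "\<dots> \<le> (\<Sum>i\<in>UNIV. d * (2 * (cmod (w i))^2))"
      by (intro sum_mono mult_right_mono) (auto simp: d_def deg_le)
    finally show ?thesis unfolding N_def by (simp add: sum_distrib_left algebra_simps)
  qed
  have S2: "(\<Sum>i\<in>UNIV. \<Sum>j\<in>UNIV. if E j i then 2 * (cmod (w j))^2 else 0) \<le> 2 * d * N"
  proof -
    have "(\<Sum>i\<in>UNIV. \<Sum>j\<in>UNIV. if E j i then 2 * (cmod (w j))^2 else 0)
        = (\<Sum>j\<in>UNIV. \<Sum>i\<in>UNIV. if E i j then 2 * (cmod (w j))^2 else 0)"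
      by (subst sum.swap) (simp add: symE)
    also have "\<dots> = (\<Sum>j\<in>UNIV. real (card {i. E i j}) * (2 * (cmod (w j))^2))"
      by (simp add: sum_if_card)
    also have "\<dots> \<le> (\<Sum>j\<in>UNIV. d * (2 * (cmod (w j))^2))"
      by (intro sum_mono mult_right_mono) (auto simp: d_def deg_le)
    finally show ?thesis unfolding N_def by (simp add: sum_distrib_left algebra_simps)
  qed
  have "Qs \<le> 4 * d * N"
  proof -
    have "Qs \<le> (\<Sum>i\<in>UNIV. \<Sum>j\<in>UNIV. (if E j i then 2 * (cmod (w i))^2 else 0) + (if E j i then 2 * (cmod (w j))^2 else 0))"
      unfolding Qs_def by (intro sum_mono qle)
    also have "\<dots> \<le> 4 * d * N" using S1 S2 by (simp add: sum.distrib)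
    finally show ?thesis .
  qed
  then have rho_le: "\<rho> \<le> 1 / n"
  proof -
    assume Q: "Qs \<le> 4 * d * N"
    have "\<rho> \<le> c * (4 * d * N) / (2 * N)" unfolding \<rho>_def using Q c0 N0
      by (intro divide_right_mono mult_left_mono) auto
    also have "\<dots> = 1 / n" unfolding c_def cc_def d_def n_def using N0 d0'
      by (simp add: field_simps d_def)
    finally show ?thesis .
  qed
  have "Qs > 0"
  proof (rule ccontr)
    assume "\<not> Qs > 0"
    then have "Qs = 0" using Qs0 by simp
    then have "\<forall>i\<in>UNIV. (\<Sum>j\<in>UNIV. q i j) = 0" unfolding Qs_def
      by (subst sum_nonneg_eq_0_iff[symmetric]) (auto intro: sum_nonneg q0)
    then have "q i j = 0" for i j using sum_nonneg_eq_0_iff[of UNIV "q i"] q0 by auto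
    then have edge: "E j i \<Longrightarrow> w i = w j" for i j unfolding q_def
      by (metis (full_types) eq_iff_diff_eq_0 norm_eq_zero zero_eq_power2)
    have "E\<^sup>*\<^sup>* a b \<Longrightarrow> w a = w b" for a b
      by (induction rule: rtranclp_induct) (auto dest: edge)
    then have const: "w a = w i0" for a using sc unfolding strongly_connected_def by metis
    have "(\<Sum>i\<in>UNIV. w i) = (\<Sum>i\<in>(UNIV::'n set). w i0)"
      using sum.cong[of UNIV UNIV w "\<lambda>_. w i0"] const by blast
    then have "(\<Sum>i\<in>UNIV. w i) = of_nat CARD('n) * w i0" by simp
    with ws i0 show False by simp
  qed
  then have "\<rho> > 0" unfolding \<rho>_def using c0 N0 by simp
  then show ?thesis using r_eq rho_le unfolding n_def by blast
qed

lemma SC: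
  fixes \<mu> :: complex and T D :: real
  assumes eq: "\<mu>^2 - of_real T * \<mu> + of_real D = 0"
    and "D < 1" "-1 < D" "T < 1 + D" "-T < 1 + D"
  shows "cmod \<mu> < 1"
proof -
  obtain a b where ab: "\<mu> = Complex a b" by (cases \<mu>)
  have re: "a^2 - b^2 - T * a + D = 0" using arg_cong[OF eq, of Re] unfolding ab
    by (simp add: power2_eq_square)
  have im: "2 * a * b - T * b = 0" using arg_cong[OF eq, of Im] unfolding ab
    by (simp add: power2_eq_square)
  show ?thesis
  proof (cases "b = 0")
    case False
    then have "a = T / 2" using im by (simp add: field_simps)
    then have "T * a = 2 * a^2" by (simp add: power2_eq_square)
    then have "a^2 + b^2 = D" using re by linarith
    then have "(cmod \<mu>)^2 < 1" unfolding ab cmod_power2 using assms by simp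
    then show ?thesis by (smt (verit) norm_ge_zero one_power2 power2_less_imp_less)
  next
    case True
    then have re': "a^2 - T * a + D = 0" using re by simp
    have "\<bar>a\<bar> < 1"
    proof (rule ccontr)
      assume "\<not> \<bar>a\<bar> < 1"
      then consider "a \<ge> 1" | "a \<le> -1" by linarith
      then show False
      proof cases
        case 1
        have "a^2 - T * a + D = (1 - T + D) + (a - 1) * (a + 1 - T)" by (simp add: power2_eq_square algebra_simps)
        moreover have "(a - 1) * (a + 1 - T) \<ge> 0" using 1 assms by (intro mult_nonneg_nonneg) auto
        ultimately show False using re' assms by linarith
      next
        case 2
        have "a^2 - T * a + D = (1 + T + D) + (a + 1) * (a - 1 - T)" by (simp add: power2_eq_square algebra_simps)
        moreover have "(a + 1) * (a - 1 - T) \<ge> 0" using 2 assms by (intro mult_nonpos_nonpos) auto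
        ultimately show False using re' assms by linarith
      qed
    qed
    then show ?thesis unfolding ab True by (simp add: cmod_def)
  qed
qed



lemma Lc_lin2: "Lc E (\<lambda>j. a * f j + g j) i = a * Lc E f i + Lc E g i"
  by (simp add: Lc_def sum.distrib sum_distrib_left algebra_simps)

lemma Lc_diff: "Lc E (\<lambda>j. f j - a * g j) i = Lc E f i - a * Lc E g i"
  by (simp add: Lc_def sum_subtractf sum_distrib_left algebra_simps)

lemma Lc_scale: "Lc E (\<lambda>j. a * f j) i = a * Lc E f i"
  by (simp add: Lc_def sum_distrib_left algebra_simps)

lemma Core:
  fixes E :: "'n::finite \<Rightarrow> 'n \<Rightarrow> bool" and eps :: real and \<mu> :: complex and y s :: "'n \<Rightarrow> complex"
  assumes n1: "CARD('n) > 1" and sym: "symmetric_graph E" and sc: "strongly_connected E"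
    and d0: "Defs.degree E > 0" and eps0: "0 < eps"
    and epsb: "eps < (1 - 1 / real CARD('n)) * (2 - 1 / real CARD('n))"
    and nz: "y \<noteq> (\<lambda>_. 0) \<or> s \<noteq> (\<lambda>_. 0)" and ys: "(\<Sum>i\<in>UNIV. y i) = 0"
    and E1: "\<And>i. y i - Lc E y i + of_real eps * s i = \<mu> * y i"
    and E2: "\<And>i. Lc E y i + of_real (1 - eps) * s i - 2 * Lc E s i = \<mu> * s i"
  shows "cmod \<mu> < 1"
proof -
  define \<epsilon> :: complex where "\<epsilon> = of_real eps"
  define V where "V i = (\<mu> - 1) * y i + Lc E y i" for i
  have Vs: "\<epsilon> * s i = V i" for i using E1[of i] unfolding V_def \<epsilon>_def by (simp add: algebra_simps)
  have y0: "y \<noteq> (\<lambda>_. 0)"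
  proof
    assume y: "y = (\<lambda>_. 0)"
    then have "Lc E y i = 0" for i by (simp add: Lc_def)
    then have "\<epsilon> * s i = 0" for i using Vs[of i] y unfolding V_def by simp
    then have "s = (\<lambda>_. 0)" using eps0 unfolding \<epsilon>_def by auto
    with y nz show False by simp
  qed
  have Ls: "\<epsilon> * Lc E s i = (\<mu> - 1) * Lc E y i + Lc E (Lc E y) i" for i
  proof -
    have "\<epsilon> * Lc E s i = Lc E (\<lambda>j. \<epsilon> * s j) i" by (simp add: Lc_scale)
    also have "(\<lambda>j. \<epsilon> * s j) = (\<lambda>j. (\<mu> - 1) * y j + Lc E y j)" using Vs unfolding V_def by auto
    finally show ?thesis by (simp add: Lc_lin2)
  qed
  define b where "b = 3 - 3 * \<mu>"
  define c0 where "c0 = (1 - \<epsilon> - \<mu>) * (\<mu> - 1)"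
  have key: "-2 * Lc E (Lc E y) i + b * Lc E y i + c0 * y i = 0" for i
  proof -
    have e2: "Lc E y i + (1 - \<epsilon>) * s i - 2 * Lc E s i - \<mu> * s i = 0"
      using E2[of i] unfolding \<epsilon>_def by simp
    have "-2 * Lc E (Lc E y) i + b * Lc E y i + c0 * y i
       = \<epsilon> * (Lc E y i + (1 - \<epsilon>) * s i - 2 * Lc E s i - \<mu> * s i)
         + (1 - \<epsilon> - \<mu>) * (V i - \<epsilon> * s i)
         - 2 * ((\<mu> - 1) * Lc E y i + Lc E (Lc E y) i - \<epsilon> * Lc E s i)"
      unfolding b_def c0_def V_def by (simp add: algebra_simps)
    also have "\<dots> = 0" using e2 Vs[of i] Ls[of i] by simp
    finally show ?thesis .
  qed
  define p where "p r = -2 * r^2 + b * r + c0" for r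
  define q where "q = csqrt (b^2 + 8 * c0)"
  define r1 where "r1 = (b + q) / 4"
  define r2 where "r2 = b / 2 - r1"
  have qq: "q^2 = b^2 + 8 * c0" unfolding q_def by simp
  have pr1: "p r1 = 0"
  proof -
    have "p r1 = (b^2 + 8 * c0 - q^2) / 8" unfolding p_def r1_def
      by (simp add: field_simps power2_eq_square)
    then show ?thesis using qq by simp
  qed
  have pr2: "p r2 = 0"
  proof -
    have "p r2 = p r1" unfolding p_def r2_def by (simp add: field_simps power2_eq_square)
    then show ?thesis using pr1 by simp
  qed
  have r12: "r1 * r2 = - c0 / 2" using pr1 unfolding p_def r2_def
    by (simp add: field_simps power2_eq_square)
  define w where "w i = Lc E y i - r2 * y i" for i
  have Lw: "Lc E w i = r1 * w i" for i
  proof -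
    have "Lc E w i = - r2 * Lc E y i + Lc E (Lc E y) i" unfolding w_def Lc_diff by simp
    moreover have "Lc E (Lc E y) i = (b / 2) * Lc E y i + (c0 / 2) * y i" using key[of i]
      by (simp add: field_simps)
    ultimately have "Lc E w i = (b / 2 - r2) * Lc E y i + (c0 / 2) * y i" by (simp add: algebra_simps)
    also have "b / 2 - r2 = r1" by (simp add: r2_def)
    also have "c0 / 2 = - (r1 * r2)" using r12 by simp
    finally show ?thesis unfolding w_def by (simp add: algebra_simps)
  qed
  have "\<exists>\<rho>. p (of_real \<rho>) = 0 \<and> 0 < \<rho> \<and> \<rho> \<le> 1 / real CARD('n)"
  proof (cases "w = (\<lambda>_. 0)")
    case True
    then have "Lc E y i = r2 * y i" for i using fun_cong[OF True, of i] unfolding w_def by simp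
    from Leig[OF sym sc d0 y0 ys this] obtain \<rho> where "r2 = of_real \<rho>" "0 < \<rho>" "\<rho> \<le> 1 / real CARD('n)"
      by blast
    then show ?thesis using pr2 by blast
  next
    case False
    have "(\<Sum>i\<in>UNIV. w i) = (\<Sum>i\<in>UNIV. Lc E y i) - r2 * (\<Sum>i\<in>UNIV. y i)"
      unfolding w_def by (simp add: sum_subtractf sum_distrib_left)
    then have ws: "(\<Sum>i\<in>UNIV. w i) = 0" using Lc_sum[OF sym] ys by simp
    from Leig[OF sym sc d0 False ws Lw] obtain \<rho> where "r1 = of_real \<rho>" "0 < \<rho>" "\<rho> \<le> 1 / real CARD('n)"
      by blast
    then show ?thesis using pr1 by blast
  qed
  then obtain \<rho> where p\<rho>: "p (of_real \<rho>) = 0" and \<rho>0: "0 < \<rho>" and \<rho>n: "\<rho> \<le> 1 / real CARD('n)" by blast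
  define T where "T = 2 - 3 * \<rho> - eps"
  define D where "D = 1 - 3 * \<rho> + 2 * \<rho>^2 - eps"
  have "\<mu>^2 - of_real T * \<mu> + of_real D = - p (of_real \<rho>)"
    unfolding T_def D_def p_def b_def c0_def \<epsilon>_def by (simp add: algebra_simps power2_eq_square)
  then have eq: "\<mu>^2 - of_real T * \<mu> + of_real D = 0" using p\<rho> by simp
  define qn where "qn = 1 / real CARD('n)"
  have qn: "qn \<le> 1 / 2" "0 < qn" unfolding qn_def using n1 by (auto simp: field_simps)
  have \<rho>q: "\<rho> \<le> qn" using \<rho>n unfolding qn_def .
  have "(1 - \<rho>) * (2 - \<rho>) - (1 - qn) * (2 - qn) = (qn - \<rho>) * (3 - qn - \<rho>)" by (simp add: algebra_simps)
  moreover have "(qn - \<rho>) * (3 - qn - \<rho>) \<ge> 0" using \<rho>q qn \<rho>0 by (intro mult_nonneg_nonneg) auto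
  ultimately have epsb': "eps < (1 - \<rho>) * (2 - \<rho>)" using epsb unfolding qn_def by linarith
  have r2: "\<rho>^2 \<le> \<rho> / 2" using \<rho>q qn \<rho>0 by (simp add: power2_eq_square)
  show ?thesis
  proof (rule SC[OF eq])
    show "D < 1" unfolding D_def using r2 \<rho>0 eps0 by simp
    have "0 < \<rho> * \<rho>" using \<rho>0 by simp
    moreover have "(1 - \<rho>) * (2 - \<rho>) = 2 - 3 * \<rho> + \<rho> * \<rho>" by (simp add: algebra_simps)
    ultimately show "-1 < D" unfolding D_def power2_eq_square using epsb' by linarith
    show "T < 1 + D" unfolding T_def D_def using \<rho>0 by simp
    show "-T < 1 + D" unfolding T_def D_def using epsb' by (simp add: algebra_simps power2_eq_square)
  qed
qed



definition Mb :: "('n::finite \<Rightarrow> 'n \<Rightarrow> bool) \<Rightarrow> real \<Rightarrow> ('n + 'n) \<Rightarrow> ('n + 'n) \<Rightarrow> real" where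
  "Mb E eps k l = (case k of
     Inl i \<Rightarrow> (case l of Inl j \<Rightarrow> (if i = j then 1 else 0) - Lmat E $ i $ j | Inr j \<Rightarrow> (if i = j then eps else 0))
   | Inr i \<Rightarrow> (case l of Inl j \<Rightarrow> Lmat E $ i $ j | Inr j \<Rightarrow> (if i = j then 1 - eps else 0) - 2 * Lmat E $ i $ j))"

definition uu :: "('n + 'n) \<Rightarrow> real" where "uu k = (case k of Inl _ \<Rightarrow> 1 | Inr _ \<Rightarrow> 0)"

definition Ab :: "('n::finite \<Rightarrow> 'n \<Rightarrow> bool) \<Rightarrow> real \<Rightarrow> ('n + 'n) \<Rightarrow> ('n + 'n) \<Rightarrow> real" where
  "Ab E eps k l = Mb E eps k l - uu k / real CARD('n)"

definition pack :: "(real^'n) \<times> (real^'n) \<Rightarrow> ('n + 'n) \<Rightarrow> real" where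
  "pack p k = (case k of Inl i \<Rightarrow> fst p $ i | Inr i \<Rightarrow> snd p $ i)"

lemma sum_delta_real: "(\<Sum>j\<in>UNIV. (if i = j then a else 0) * (f j :: real)) = a * f (i::'n::finite)"
  using sum_delta_of_real[of i a f] by simp

lemma P1: assumes sym: "symmetric_graph E"
  shows "pack (Mstep E eps p) = lin (Mb E eps) (pack p)"
proof
  fix k
  show "pack (Mstep E eps p) k = lin (Mb E eps) (pack p) k"
  proof (cases k)
    case (Inl i)
    show ?thesis unfolding Inl lin_apply sum_UNIV_Plus
      by (simp add: Mstep_def pack_def matrix_vector_mult_def Mb_def Finite_Cartesian_Product.mat_def if_distrib cong: if_cong)
  next
    case (Inr i)
    show ?thesis unfolding Inr lin_apply sum_UNIV_Plus
      apply (simp add: Mstep_def pack_def matrix_vector_mult_def Mb_def Finite_Cartesian_Product.mat_def Smat_entry[OF sym] algebra_simps)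
      apply (intro sum.cong refl)
      apply (simp add: algebra_simps)
      done
  qed
qed

lemma colM: assumes sym: "symmetric_graph E" shows "(\<Sum>k\<in>UNIV. Mb E eps k l) = 1"
proof (cases l)
  case (Inl j)
  have "(\<Sum>k\<in>UNIV. Mb E eps k l) = (\<Sum>i\<in>UNIV. (if i = j then 1 else 0) - Lmat E $ i $ j) + (\<Sum>i\<in>UNIV. Lmat E $ i $ j)"
    unfolding sum_UNIV_Plus Inl by (simp add: Mb_def)
  also have "\<dots> = 1" by (simp add: sum_subtractf Lcol[OF sym])
  finally show ?thesis .
next
  case (Inr j)
  have "(\<Sum>k\<in>UNIV. Mb E eps k l) = (\<Sum>i\<in>UNIV. (if i = j then eps else 0)) + (\<Sum>i\<in>UNIV. (if i = j then 1 - eps else 0) - 2 * Lmat E $ i $ j)"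
    unfolding sum_UNIV_Plus Inr by (simp add: Mb_def)
  also have "\<dots> = 1" by (simp add: sum_subtractf Lcol[OF sym] sum_distrib_left[symmetric])
  finally show ?thesis .
qed

lemma P2: assumes sym: "symmetric_graph E"
  shows "(\<Sum>k\<in>UNIV. lin (Mb E eps) w k) = (\<Sum>k\<in>UNIV. w k)"
proof -
  have "(\<Sum>k\<in>UNIV. lin (Mb E eps) w k) = (\<Sum>l\<in>UNIV. \<Sum>k\<in>UNIV. Mb E eps k l * w l)"
    unfolding lin_apply by (rule sum.swap)
  also have "\<dots> = (\<Sum>l\<in>UNIV. (\<Sum>k\<in>UNIV. Mb E eps k l) * w l)" by (simp add: sum_distrib_right)
  also have "\<dots> = (\<Sum>l\<in>UNIV. w l)" using colM[OF sym] by simp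
  finally show ?thesis .
qed

lemma P3: "lin (Mb E eps) (pack (a *\<^sub>R Finite_Cartesian_Product.vec 1, 0)) = pack (a *\<^sub>R Finite_Cartesian_Product.vec 1, 0)"
proof
  fix k
  show "lin (Mb E eps) (pack (a *\<^sub>R Finite_Cartesian_Product.vec 1, 0)) k = pack (a *\<^sub>R Finite_Cartesian_Product.vec 1, 0) k"
  proof (cases k)
    case (Inl i)
    have "(\<Sum>j\<in>UNIV. ((if i = j then 1 else 0) - Lmat E $ i $ j) * a) = a"
      using Lrow[of E i] by (simp add: left_diff_distrib sum_subtractf sum_distrib_right[symmetric])
    then show ?thesis unfolding Inl lin_apply sum_UNIV_Plus by (simp add: pack_def Mb_def)
  next
    case (Inr i)
    show ?thesis unfolding Inr lin_apply sum_UNIV_Plus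
      using Lrow[of E i] by (simp add: pack_def Mb_def sum_distrib_right[symmetric])
  qed
qed

lemma lin_diff: "lin B (\<lambda>k. f k - g k) = (\<lambda>k. lin B f k - lin B g k)"
  by (simp add: lin_def fun_eq_iff sum_subtractf right_diff_distrib)

lemma lin_Ab: fixes E :: "'n::finite \<Rightarrow> 'n \<Rightarrow> bool" shows "lin (Ab E eps) w = (\<lambda>k. lin (Mb E eps) w k - uu k * (\<Sum>l\<in>UNIV. w l) / real CARD('n))"
  by (simp add: lin_def fun_eq_iff Ab_def left_diff_distrib sum_subtractf sum_distrib_left sum_divide_distrib)

lemma sum_pack: "(\<Sum>k\<in>UNIV. pack p k) = (\<Sum>i\<in>UNIV. fst p $ i) + (\<Sum>i\<in>UNIV. snd p $ i)"
  unfolding sum_UNIV_Plus by (simp add: pack_def)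

lemma degree_pos:
  assumes n1: "CARD('n::finite) > 1" and sc: "strongly_connected (E :: 'n \<Rightarrow> 'n \<Rightarrow> bool)"
  shows "Defs.degree E > 0"
proof -
  obtain a b :: 'n where ab: "a \<noteq> b"
    using n1 card_le_Suc0_iff_eq[of "UNIV :: 'n set"] by force
  have "E\<^sup>*\<^sup>* a b" using sc unfolding strongly_connected_def by auto
  then obtain k where "E a k" using ab by (cases rule: converse_rtranclpE) auto
  then have "card {j. E j k} > 0" by (auto simp: card_gt_0_iff)
  then show ?thesis using deg_le[of E k] by linarith
qed

lemma EV:
  fixes E :: "'n::finite \<Rightarrow> 'n \<Rightarrow> bool" and eps :: real and \<mu> :: complex and z :: "'n + 'n \<Rightarrow> complex"
  assumes n1: "CARD('n) > 1" and sym: "symmetric_graph E" and sc: "strongly_connected E"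
    and eps0: "0 < eps"
    and epsb: "eps < (1 - 1 / real CARD('n)) * (2 - 1 / real CARD('n))"
    and z0: "z \<noteq> (\<lambda>_. 0)"
    and ev: "\<And>k. (\<Sum>l\<in>UNIV. complex_of_real (Ab E eps k l) * z l) = \<mu> * z k"
  shows "cmod \<mu> < 1"
proof -
  define y where "y i = z (Inl i)" for i
  define s where "s i = z (Inr i)" for i
  define \<epsilon> :: complex where "\<epsilon> = of_real eps"
  define n where "n = real CARD('n)"
  have n0: "n > 0" unfolding n_def by simp
  define \<sigma> where "\<sigma> = (\<Sum>l\<in>UNIV. z l)"
  have \<sigma>: "\<sigma> = (\<Sum>i\<in>UNIV. y i) + (\<Sum>i\<in>UNIV. s i)" unfolding \<sigma>_def sum_UNIV_Plus y_def s_def ..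
  have split: "(\<Sum>l\<in>UNIV. complex_of_real (Ab E eps k l) * z l) =
     (\<Sum>l\<in>UNIV. complex_of_real (Mb E eps k l) * z l) - of_real (uu k / n) * \<sigma>" for k
    unfolding Ab_def \<sigma>_def n_def of_real_diff left_diff_distrib sum_subtractf sum_distrib_left ..
  have eqL: "y i - Lc E y i + \<epsilon> * s i - of_real (1 / n) * \<sigma> = \<mu> * y i" for i
  proof -
    have "(\<Sum>l\<in>UNIV. complex_of_real (Mb E eps (Inl i) l) * z l)
       = (\<Sum>j\<in>UNIV. of_real (if i = j then 1 else 0) * y j) - Lc E y i + (\<Sum>j\<in>UNIV. of_real (if i = j then eps else 0) * s j)"
      unfolding sum_UNIV_Plus Lc_def y_def s_def
      by (simp add: Mb_def of_real_diff left_diff_distrib sum_subtractf)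
    also have "\<dots> = y i - Lc E y i + \<epsilon> * s i" unfolding sum_delta_of_real \<epsilon>_def by simp
    finally have C: "(\<Sum>l\<in>UNIV. complex_of_real (Mb E eps (Inl i) l) * z l) = y i - Lc E y i + \<epsilon> * s i" .
    have h: "(\<Sum>l\<in>UNIV. complex_of_real (Mb E eps (Inl i) l) * z l) - of_real (uu (Inl i) / n) * \<sigma> = \<mu> * y i"
      using ev[of "Inl i"] split[of "Inl i"] unfolding y_def by argo
    have u: "uu (Inl i) = 1" by (simp add: uu_def)
    show ?thesis using h unfolding C u .
  qed
  have eqR: "Lc E y i + of_real (1 - eps) * s i - 2 * Lc E s i = \<mu> * s i" for i
  proof -
    have "(\<Sum>l\<in>UNIV. complex_of_real (Mb E eps (Inr i) l) * z l)
       = Lc E y i + ((\<Sum>j\<in>UNIV. of_real (if i = j then 1 - eps else 0) * s j) - 2 * Lc E s i)"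
      unfolding sum_UNIV_Plus Lc_def y_def s_def
      by (simp add: Mb_def of_real_diff left_diff_distrib sum_subtractf sum_distrib_left mult.assoc)
    also have "\<dots> = Lc E y i + of_real (1 - eps) * s i - 2 * Lc E s i" unfolding sum_delta_of_real by simp
    finally have C: "(\<Sum>l\<in>UNIV. complex_of_real (Mb E eps (Inr i) l) * z l) = Lc E y i + of_real (1 - eps) * s i - 2 * Lc E s i" .
    have h: "(\<Sum>l\<in>UNIV. complex_of_real (Mb E eps (Inr i) l) * z l) - of_real (uu (Inr i) / n) * \<sigma> = \<mu> * s i"
      using ev[of "Inr i"] split[of "Inr i"] unfolding s_def by argo
    have u: "uu (Inr i) = 0" by (simp add: uu_def)
    show ?thesis using h unfolding C u by simp
  qed
  have sumL: "(\<Sum>i\<in>UNIV. y i) - 0 + \<epsilon> * (\<Sum>i\<in>UNIV. s i) - \<sigma> = \<mu> * (\<Sum>i\<in>UNIV. y i)"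
  proof -
    have A1: "(\<Sum>i\<in>UNIV. y i - Lc E y i + \<epsilon> * s i - of_real (1 / n) * \<sigma>) = (\<Sum>i\<in>UNIV. \<mu> * y i)"
      using eqL by simp
    have A2: "(\<Sum>i\<in>UNIV. y i - Lc E y i + \<epsilon> * s i - of_real (1 / n) * \<sigma>)
       = (\<Sum>i\<in>UNIV. y i) - (\<Sum>i\<in>UNIV. Lc E y i) + \<epsilon> * (\<Sum>i\<in>UNIV. s i) - of_real n * of_real (1 / n) * \<sigma>"
      by (simp add: sum.distrib sum_subtractf sum_distrib_left n_def)
    have X1: "of_real n * of_real (1 / n) = (1::complex)" using n0
      by (simp flip: of_real_mult)
    have "\<mu> * (\<Sum>i\<in>UNIV. y i) = (\<Sum>i\<in>UNIV. \<mu> * y i)" by (simp add: sum_distrib_left)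
    also have "\<dots> = (\<Sum>i\<in>UNIV. y i) - (\<Sum>i\<in>UNIV. Lc E y i) + \<epsilon> * (\<Sum>i\<in>UNIV. s i) - of_real n * of_real (1 / n) * \<sigma>"
      using A1 A2 by simp
    finally show ?thesis unfolding X1 Lc_sum[OF sym] by simp
  qed
  have sumR: "of_real (1 - eps) * (\<Sum>i\<in>UNIV. s i) = \<mu> * (\<Sum>i\<in>UNIV. s i)"
  proof -
    have "(\<Sum>i\<in>UNIV. Lc E y i + of_real (1 - eps) * s i - 2 * Lc E s i) = (\<Sum>i\<in>UNIV. \<mu> * s i)"
      using eqR by simp
    then show ?thesis using Lc_sum[OF sym]
      by (simp add: sum.distrib sum_subtractf sum_distrib_left[symmetric])
  qed
  have nq: "1 / n > 0" "1 / n \<le> 1 / 2" using n1 unfolding n_def by (auto simp: field_simps)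
  have eps2: "eps < 2"
  proof -
    have "(1 / n) * (1 / n) \<le> (1 / n) * 3" using nq by (intro mult_left_mono) linarith+
    moreover have "(1 - 1 / n) * (2 - 1 / n) = 2 - 3 * (1 / n) + (1 / n) * (1 / n)" by (simp add: algebra_simps)
    ultimately have "(1 - 1 / n) * (2 - 1 / n) \<le> 2" by linarith
    then show ?thesis using epsb unfolding n_def by linarith
  qed
  show ?thesis
  proof (cases "\<mu> = 0")
    case True then show ?thesis by simp
  next
    case \<mu>0: False
    have a: "\<mu> * (\<Sum>i\<in>UNIV. y i) = \<epsilon> * (\<Sum>i\<in>UNIV. s i) - (\<Sum>i\<in>UNIV. s i)"
      using sumL unfolding \<sigma> by (simp add: algebra_simps)
    have b: "\<mu> * (\<Sum>i\<in>UNIV. s i) = (1 - \<epsilon>) * (\<Sum>i\<in>UNIV. s i)" using sumR unfolding \<epsilon>_def by (auto simp: mult.commute)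
    have "\<mu> * \<sigma> = \<mu> * (\<Sum>i\<in>UNIV. y i) + \<mu> * (\<Sum>i\<in>UNIV. s i)" unfolding \<sigma> by (simp add: distrib_left)
    also have "\<dots> = 0" unfolding a b by (simp add: algebra_simps)
    finally have "\<mu> * \<sigma> = 0" .
    then have \<sigma>0: "\<sigma> = 0" using \<mu>0 by simp
    show ?thesis
    proof (cases "(\<Sum>i\<in>UNIV. s i) = 0")
      case False
      then have "\<mu> = of_real (1 - eps)" using sumR by simp
      moreover have "cmod (1 - complex_of_real eps) = \<bar>1 - eps\<bar>"
        by (metis norm_of_real of_real_1 of_real_diff)
      ultimately show ?thesis using eps0 eps2 by simp
    next
      case True
      then have ys: "(\<Sum>i\<in>UNIV. y i) = 0" using \<sigma> \<sigma>0 by simp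
      have nz: "y \<noteq> (\<lambda>_. 0) \<or> s \<noteq> (\<lambda>_. 0)"
      proof (rule ccontr)
        assume "\<not> ?thesis"
        then have "y = (\<lambda>_. 0)" "s = (\<lambda>_. 0)" by auto
        then have "z k = 0" for k unfolding y_def s_def by (cases k) (metis, metis)
        with z0 show False by auto
      qed
      have E1: "y i - Lc E y i + of_real eps * s i = \<mu> * y i" for i
        using eqL[of i] \<sigma>0 unfolding \<epsilon>_def by simp
      show ?thesis
        by (rule Core[OF n1 sym sc degree_pos[OF n1 sc] eps0 epsb nz ys E1 eqR])
    qed
  qed
qed



theorem proposition4:
  fixes E :: "'n::finite \<Rightarrow> 'n \<Rightarrow> bool" and eps :: real
  assumes "CARD('n) > 1"
    and "no_selfloops E"
    and "symmetric_graph E"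
    and "strongly_connected E"
    and "0 < eps"
    and "eps < (1 - 1 / real CARD('n)) * (2 - 1 / real CARD('n))"
  shows "average_consensus E eps"
proof -
  note n1 = assms(1) and sym = assms(3) and sc = assms(4) and eps0 = assms(5) and epsb = assms(6)
  show ?thesis unfolding average_consensus_def
  proof
    fix x0 :: "real^'n"
    define a where "a = (\<Sum>i\<in>UNIV. x0 $ i) / real CARD('n)"
    define c where "c = pack (a *\<^sub>R Finite_Cartesian_Product.vec 1, 0 :: real^'n)"
    define W where "W t = (\<lambda>k. pack (traj E eps x0 t) k - c k)" for t
    have trajS: "traj E eps x0 (Suc t) = Mstep E eps (traj E eps x0 t)" for t
      by (simp add: traj_def)
    have sum_traj: "(\<Sum>k\<in>UNIV. pack (traj E eps x0 t) k) = (\<Sum>i\<in>UNIV. x0 $ i)" for t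
    proof (induction t)
      case 0 then show ?case by (simp add: traj_def sum_pack)
    next
      case (Suc t) then show ?case unfolding trajS P1[OF sym] P2[OF sym] .
    qed
    have sum_c: "(\<Sum>k\<in>UNIV. c k) = (\<Sum>i\<in>UNIV. x0 $ i)"
      unfolding c_def sum_pack a_def by simp
    have sumW: "(\<Sum>k\<in>UNIV. W t k) = 0" for t
      unfolding W_def sum_subtractf sum_traj sum_c by simp
    have Wstep: "W (Suc t) = lin (Ab E eps) (W t)" for t
    proof -
      have "lin (Ab E eps) (W t) = (\<lambda>k. lin (Mb E eps) (W t) k)"
        unfolding lin_Ab sumW by simp
      also have "\<dots> = (\<lambda>k. lin (Mb E eps) (pack (traj E eps x0 t)) k - lin (Mb E eps) c k)"
        unfolding W_def lin_diff ..
      also have "\<dots> = W (Suc t)"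
        unfolding W_def trajS P1[OF sym] c_def P3 ..
      finally show ?thesis by simp
    qed
    have Wpow: "W t = (lin (Ab E eps) ^^ t) (W 0)" for t
      by (induction t) (simp_all add: Wstep)
    have lim: "(\<lambda>t. pack (traj E eps x0 t) k) \<longlonglongrightarrow> c k" for k
    proof -
      have "(\<lambda>t. (lin (Ab E eps) ^^ t) (W 0) k) \<longlonglongrightarrow> 0"
        by (rule decay) (rule EV[OF n1 sym sc eps0 epsb])
      then have "(\<lambda>t. W t k) \<longlonglongrightarrow> 0" unfolding Wpow[symmetric] .
      then have "(\<lambda>t. W t k + c k) \<longlonglongrightarrow> 0 + c k" by (intro tendsto_add tendsto_const)
      then show ?thesis unfolding W_def by simp
    qed
    have f: "(\<lambda>t. fst (traj E eps x0 t)) \<longlonglongrightarrow> a *\<^sub>R Finite_Cartesian_Product.vec 1"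
    proof (rule vec_tendstoI)
      fix i
      show "(\<lambda>t. fst (traj E eps x0 t) $ i) \<longlonglongrightarrow> (a *\<^sub>R Finite_Cartesian_Product.vec 1) $ i"
        using lim[of "Inl i"] unfolding c_def pack_def by simp
    qed
    have s: "(\<lambda>t. snd (traj E eps x0 t)) \<longlonglongrightarrow> (0 :: real^'n)"
    proof (rule vec_tendstoI)
      fix i
      show "(\<lambda>t. snd (traj E eps x0 t) $ i) \<longlonglongrightarrow> (0 :: real^'n) $ i"
        using lim[of "Inr i"] unfolding c_def pack_def by simp
    qed
    have "(\<lambda>t. (fst (traj E eps x0 t), snd (traj E eps x0 t))) \<longlonglongrightarrow> (a *\<^sub>R Finite_Cartesian_Product.vec 1, 0 :: real^'n)"
      by (rule tendsto_Pair[OF f s])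
    then show "traj E eps x0 \<longlonglongrightarrow> (((\<Sum>i\<in>UNIV. x0 $ i) / real CARD('n)) *\<^sub>R Finite_Cartesian_Product.vec 1, 0)"
      unfolding a_def by simp
  qed
qed


end
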